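(* Consider Configuration II (two agents in mutual beacon-referenced pursuit of a single beacon at the origin, $b=0$) with parameters $\mu>0$, $\lambda\in(0,1)$, $a\in[-1,1]$ and $a_0=0$. A circling equilibrium exists if and only if $a<0$, and at a circling equilibrium the shape variables satisfy $$\bar x_1=\bar x_2=0,\quad \bar x_{1b1}=\bar x_{2b2}=0,\quad \tilde x=-1,\quad \rho=\frac{2}{(1-\lambda)\mu(-a)},\quad \rho_{1b1}=\rho_{2b2}.$$
   Context: Two-agent setup: beacons $\mathbf r_{b1}=(0,0,-b)$, $\mathbf r_{b2}=(0,0,b)$ with $b\ge0$, $\hat{\mathbf b}=\mathbf r_{b2}-\mathbf r_{b1}=(0,0,2b)$. Agents $i=1,2$ have positions $\mathbf r_i\in\mathbb R^3$ and unit velocities $\mathbf x_i$. Let $\mathbf r=\mathbf r_1-\mathbf r_2$, $\mathbf r_{1b1}=\mathbf r_1-\mathbf r_{b1}$, $\mathbf r_{2b2}=\mathbf r_2-\mathbf r_{b2}$, $\rho=|\mathbf r|$, $\rho_{1b1}=|\mathbf r_{1b1}|$, $\rho_{2b2}=|\mathbf r_{2b2}|$, $\bar x_1=\mathbf x_1\cdot\mathbf r/\rho$, $\bar x_2=-\mathbf x_2\cdot\mathbf r/\rho$, $\bar x_{1b1}=\mathbf x_1\cdot\mathbf r_{1b1}/\rho_{1b1}$, $\bar x_{2b2}=\mathbf x_2\cdot\mathbf r_{2b2}/\rho_{2b2}$, $\tilde x=\mathbf x_1\cdot\mathbf x_2$, $\hat r_i=\mathbf r_i\cdot\hat{\mathbf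 b}$, $\hat x_i=\mathbf x_i\cdot\hat{\mathbf b}$. With gain $\mu>0$, weight $\lambda\in(0,1)$, common agent-bearing parameter $a\in[-1,1]$ and common beacon-bearing parameter $a_0\in[-1,1]$, the closed-loop dynamics are $\dot{\mathbf r}_i=\mathbf x_i$ and $$\dot{\mathbf x}_1=-(1-\lambda)\mu(\bar x_1-a)\Bigl(\tfrac{\mathbf r}{\rho}-\bar x_1\mathbf x_1\Bigr)-\lambda\mu(\bar x_{1b1}-a_0)\Bigl(\tfrac{\mathbf r_{1b1}}{\rho_{1b1}}-\bar x_{1b1}\mathbf x_1\Bigr),$$ $$\dot{\mathbf x}_2=-(1-\lambda)\mu(\bar x_2-a)\Bigl(-\tfrac{\mathbf r}{\rho}-\bar x_2\mathbf x_2\Bigr)-\lambda\mu(\bar x_{2b2}-a_0)\Bigl(\tfrac{\mathbf r_{2b2}}{\rho_{2b2}}-\bar x_{2b2}\mathbf x_2\Bigr).$$ The shape variables $(\bar x_1,\bar x_2,\bar x_{1b1},\bar x_{2b2},\tilde x,\rho,\rho_{1b1},\rho_{2b2},\hat r_1,\hat r_2,\hat x_1,\hat x_2)$ have time derivatives along this flow that depend only on the shape variables. A circling equilibrium is a state with $\rho,\rho_{1b1},\rho_{2b2}>0$ at which the time derivatives of all shape variables vanish. Configuration II is the case $b=0$ (single beacon at the origin, so $\hat{\mathbf b}=\mathbf 0$ and $\hat r_i=\hat x_i=0$). *)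

theory Defs
  imports "HOL-Analysis.Analysis"
begin

type_synonym vec3 = "real^3"

text \<open>A state of the two-agent system: (r1, r2, x1, x2), positions and unit velocities.\<close>
type_synonym state = "vec3 \<times> vec3 \<times> vec3 \<times> vec3"

definition e3 :: vec3 where "e3 = axis 3 1"

definition rb1 :: "real \<Rightarrow> vec3" where "rb1 b = - (b *\<^sub>R e3)"
definition rb2 :: "real \<Rightarrow> vec3" where "rb2 b = b *\<^sub>R e3"
definition bhat :: "real \<Rightarrow> vec3" where "bhat b = rb2 b - rb1 b"

definition xdot1 :: "real \<Rightarrow> real \<Rightarrow> real \<Rightarrow> real \<Rightarrow> real \<Rightarrow> state \<Rightarrow> vec3" where
  "xdot1 mu lam a a0 b S = (case S of (r1, r2, x1, x2) \<Rightarrow>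
     let r = r1 - r2; p = norm r; r1b1 = r1 - rb1 b; p1b1 = norm r1b1;
         xb1 = x1 \<bullet> r / p; xb1b1 = x1 \<bullet> r1b1 / p1b1
     in - ((1 - lam) * mu * (xb1 - a)) *\<^sub>R ((1 / p) *\<^sub>R r - xb1 *\<^sub>R x1)
        - (lam * mu * (xb1b1 - a0)) *\<^sub>R ((1 / p1b1) *\<^sub>R r1b1 - xb1b1 *\<^sub>R x1))"

definition xdot2 :: "real \<Rightarrow> real \<Rightarrow> real \<Rightarrow> real \<Rightarrow> real \<Rightarrow> state \<Rightarrow> vec3" where
  "xdot2 mu lam a a0 b S = (case S of (r1, r2, x1, x2) \<Rightarrow>
     let r = r1 - r2; p = norm r; r2b2 = r2 - rb2 b; p2b2 = norm r2b2;
         xb2 = - (x2 \<bullet> r / p); xb2b2 = x2 \<bullet> r2b2 / p2b2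
     in - ((1 - lam) * mu * (xb2 - a)) *\<^sub>R (- ((1 / p) *\<^sub>R r) - xb2 *\<^sub>R x2)
        - (lam * mu * (xb2b2 - a0)) *\<^sub>R ((1 / p2b2) *\<^sub>R r2b2 - xb2b2 *\<^sub>R x2))"

definition field :: "real \<Rightarrow> real \<Rightarrow> real \<Rightarrow> real \<Rightarrow> real \<Rightarrow> state \<Rightarrow> state" where
  "field mu lam a a0 b S = (case S of (r1, r2, x1, x2) \<Rightarrow>
     (x1, x2, xdot1 mu lam a a0 b S, xdot2 mu lam a a0 b S))"

text \<open>Straight line through S in the direction of the vector field; the time derivative of a
  shape variable along the flow at S is the derivative at t = 0 along this line.\<close>
definition flow_line :: "real \<Rightarrow> real \<Rightarrow> real \<Rightarrow> real \<Rightarrow> real \<Rightarrow> state \<Rightarrow> real \<Rightarrow> state" where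
  "flow_line mu lam a a0 b S t = (case S of (r1, r2, x1, x2) \<Rightarrow>
     case field mu lam a a0 b S of (v1, v2, w1, w2) \<Rightarrow>
       (r1 + t *\<^sub>R v1, r2 + t *\<^sub>R v2, x1 + t *\<^sub>R w1, x2 + t *\<^sub>R w2))"

definition rho :: "state \<Rightarrow> real" where
  "rho S = (case S of (r1, r2, x1, x2) \<Rightarrow> norm (r1 - r2))"
definition rho1b1 :: "real \<Rightarrow> state \<Rightarrow> real" where
  "rho1b1 b S = (case S of (r1, r2, x1, x2) \<Rightarrow> norm (r1 - rb1 b))"
definition rho2b2 :: "real \<Rightarrow> state \<Rightarrow> real" where
  "rho2b2 b S = (case S of (r1, r2, x1, x2) \<Rightarrow> norm (r2 - rb2 b))"
definition xbar1 :: "state \<Rightarrow> real" where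
  "xbar1 S = (case S of (r1, r2, x1, x2) \<Rightarrow> x1 \<bullet> (r1 - r2) / norm (r1 - r2))"
definition xbar2 :: "state \<Rightarrow> real" where
  "xbar2 S = (case S of (r1, r2, x1, x2) \<Rightarrow> - (x2 \<bullet> (r1 - r2) / norm (r1 - r2)))"
definition xbar1b1 :: "real \<Rightarrow> state \<Rightarrow> real" where
  "xbar1b1 b S = (case S of (r1, r2, x1, x2) \<Rightarrow> x1 \<bullet> (r1 - rb1 b) / norm (r1 - rb1 b))"
definition xbar2b2 :: "real \<Rightarrow> state \<Rightarrow> real" where
  "xbar2b2 b S = (case S of (r1, r2, x1, x2) \<Rightarrow> x2 \<bullet> (r2 - rb2 b) / norm (r2 - rb2 b))"
definition xtilde :: "state \<Rightarrow> real" where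
  "xtilde S = (case S of (r1, r2, x1, x2) \<Rightarrow> x1 \<bullet> x2)"
definition rhat1 :: "real \<Rightarrow> state \<Rightarrow> real" where
  "rhat1 b S = (case S of (r1, r2, x1, x2) \<Rightarrow> r1 \<bullet> bhat b)"
definition rhat2 :: "real \<Rightarrow> state \<Rightarrow> real" where
  "rhat2 b S = (case S of (r1, r2, x1, x2) \<Rightarrow> r2 \<bullet> bhat b)"
definition xhat1 :: "real \<Rightarrow> state \<Rightarrow> real" where
  "xhat1 b S = (case S of (r1, r2, x1, x2) \<Rightarrow> x1 \<bullet> bhat b)"
definition xhat2 :: "real \<Rightarrow> state \<Rightarrow> real" where
  "xhat2 b S = (case S of (r1, r2, x1, x2) \<Rightarrow> x2 \<bullet> bhat b)"

definition shape_vars :: "real \<Rightarrow> (state \<Rightarrow> real) list" where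
  "shape_vars b = [xbar1, xbar2, xbar1b1 b, xbar2b2 b, xtilde, rho, rho1b1 b, rho2b2 b,
                   rhat1 b, rhat2 b, xhat1 b, xhat2 b]"

definition admissible :: "state \<Rightarrow> bool" where
  "admissible S = (case S of (r1, r2, x1, x2) \<Rightarrow> norm x1 = 1 \<and> norm x2 = 1)"

definition circling_equilibrium :: "real \<Rightarrow> real \<Rightarrow> real \<Rightarrow> real \<Rightarrow> real \<Rightarrow> state \<Rightarrow> bool" where
  "circling_equilibrium mu lam a a0 b S \<longleftrightarrow>
     admissible S \<and> rho S > 0 \<and> rho1b1 b S > 0 \<and> rho2b2 b S > 0 \<and>
     (\<forall>f \<in> set (shape_vars b).
        ((\<lambda>t. f (flow_line mu lam a a0 b S t)) has_real_derivative 0) (at 0))"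

end

theory Submission imports Defs begin
lemma d_inner: "((\<lambda>t. (A + t *\<^sub>R B) \<bullet> (C + t *\<^sub>R E)) has_real_derivative (B \<bullet> C + A \<bullet> E)) (at 0)"
proof -
  have eq: "(\<lambda>t. (A + t *\<^sub>R B) \<bullet> (C + t *\<^sub>R E)) = (\<lambda>t. A \<bullet> C + t * (B \<bullet> C + A \<bullet> E) + t^2 * (B \<bullet> E))"
    by (rule ext) (simp add: inner_add_left inner_add_right algebra_simps power2_eq_square)
  show ?thesis unfolding eq by (auto intro!: derivative_eq_intros)
qed
lemma d_norm: assumes "F \<noteq> 0" shows "((\<lambda>t. norm (F + t *\<^sub>R G)) has_real_derivative (F \<bullet> G / norm F)) (at 0)"
proof -
  have eq: "(\<lambda>t. norm (F + t *\<^sub>R G)) = (\<lambda>t. sqrt ((F + t *\<^sub>R G) \<bullet> (F + t *\<^sub>R G)))"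
    by (rule ext) (simp add: norm_eq_sqrt_inner)
  have pos: "0 < F \<bullet> F" using assms by simp
  have "((\<lambda>t. sqrt ((F + t *\<^sub>R G) \<bullet> (F + t *\<^sub>R G))) has_real_derivative
     (inverse (sqrt ((F + 0 *\<^sub>R G) \<bullet> (F + 0 *\<^sub>R G))) / 2 * (G \<bullet> F + F \<bullet> G))) (at 0)"
    apply (rule DERIV_real_sqrt[THEN DERIV_chain2])
    using pos apply simp
    by (rule d_inner)
  moreover have "inverse (sqrt ((F + 0 *\<^sub>R G) \<bullet> (F + 0 *\<^sub>R G))) / 2 * (G \<bullet> F + F \<bullet> G) = F \<bullet> G / norm F"
    by (simp add: norm_eq_sqrt_inner inner_commute field_simps)
  ultimately show ?thesis unfolding eq by simp
qed
lemma d_quot: fixes A B C E F G :: "'a::real_inner" assumes "F \<noteq> 0"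
  shows "((\<lambda>t. (A + t *\<^sub>R B) \<bullet> (C + t *\<^sub>R E) / norm (F + t *\<^sub>R G)) has_real_derivative
     (((B \<bullet> C + A \<bullet> E) * norm F - (A \<bullet> C) * (F \<bullet> G / norm F)) / (norm F * norm F))) (at 0)"
  using DERIV_divide[OF d_inner[of A B C E] d_norm[OF assms, of G]] assms by (simp add: power2_eq_square)
lemma fl: "flow_line mu lam a a0 b (r1,r2,x1,x2) t = (r1 + t *\<^sub>R x1, r2 + t *\<^sub>R x2,
   x1 + t *\<^sub>R xdot1 mu lam a a0 b (r1,r2,x1,x2), x2 + t *\<^sub>R xdot2 mu lam a a0 b (r1,r2,x1,x2))"
  by (simp add: flow_line_def field_def)
lemma rb0[simp]: "rb1 0 = 0" "rb2 0 = 0" "bhat 0 = 0" by (simp_all add: rb1_def rb2_def bhat_def)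
lemma lin: fixes r1 r2 x1 x2 :: "'a::real_vector" shows "(r1 + t *\<^sub>R x1) - (r2 + t *\<^sub>R x2) = (r1 - r2) + t *\<^sub>R (x1 - x2)"
  by (simp add: algebra_simps)

context fixes mu lam a a0 :: real and r1 r2 x1 x2 :: vec3
begin
abbreviation "L f \<equiv> (\<lambda>t. f (flow_line mu lam a a0 0 (r1,r2,x1,x2) t))"
abbreviation "W1 \<equiv> xdot1 mu lam a a0 0 (r1,r2,x1,x2)"
abbreviation "W2 \<equiv> xdot2 mu lam a a0 0 (r1,r2,x1,x2)"

lemma dv_rho: assumes "r1 - r2 \<noteq> 0" shows "(L rho has_real_derivative ((r1-r2) \<bullet> (x1-x2) / norm (r1-r2))) (at 0)"
  unfolding fl rho_def using d_norm[OF assms] by (simp add: lin)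
lemma dv_rho1: assumes "r1 \<noteq> 0" shows "(L (rho1b1 0) has_real_derivative (r1 \<bullet> x1 / norm r1)) (at 0)"
  unfolding fl rho1b1_def using d_norm[OF assms] by simp
lemma dv_rho2: assumes "r2 \<noteq> 0" shows "(L (rho2b2 0) has_real_derivative (r2 \<bullet> x2 / norm r2)) (at 0)"
  unfolding fl rho2b2_def using d_norm[OF assms] by simp
lemma dv_xb1: assumes "r1 - r2 \<noteq> 0" shows "(L xbar1 has_real_derivative
   (((W1 \<bullet> (r1-r2) + x1 \<bullet> (x1-x2)) * norm (r1-r2) - (x1 \<bullet> (r1-r2)) * ((r1-r2) \<bullet> (x1-x2) / norm (r1-r2))) / (norm (r1-r2) * norm (r1-r2)))) (at 0)"
  unfolding fl xbar1_def using d_quot[OF assms] by (simp add: lin)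
lemma dv_xb2: assumes "r1 - r2 \<noteq> 0" shows "(L xbar2 has_real_derivative
   - (((W2 \<bullet> (r1-r2) + x2 \<bullet> (x1-x2)) * norm (r1-r2) - (x2 \<bullet> (r1-r2)) * ((r1-r2) \<bullet> (x1-x2) / norm (r1-r2))) / (norm (r1-r2) * norm (r1-r2)))) (at 0)"
  unfolding fl xbar2_def using DERIV_minus[OF d_quot[OF assms]] by (simp add: lin)
lemma dv_xb1b1: assumes "r1 \<noteq> 0" shows "(L (xbar1b1 0) has_real_derivative
   (((W1 \<bullet> r1 + x1 \<bullet> x1) * norm r1 - (x1 \<bullet> r1) * (r1 \<bullet> x1 / norm r1)) / (norm r1 * norm r1))) (at 0)"
  unfolding fl xbar1b1_def using d_quot[OF assms] by simp
lemma dv_xb2b2: assumes "r2 \<noteq> 0" shows "(L (xbar2b2 0) has_real_derivative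
   (((W2 \<bullet> r2 + x2 \<bullet> x2) * norm r2 - (x2 \<bullet> r2) * (r2 \<bullet> x2 / norm r2)) / (norm r2 * norm r2))) (at 0)"
  unfolding fl xbar2b2_def using d_quot[OF assms] by simp
lemma dv_xt: shows "(L xtilde has_real_derivative (W1 \<bullet> x2 + x1 \<bullet> W2)) (at 0)"
  unfolding fl xtilde_def using d_inner by simp
lemma dv_hats: "(L (rhat1 0) has_real_derivative 0) (at 0)" "(L (rhat2 0) has_real_derivative 0) (at 0)"
   "(L (xhat1 0) has_real_derivative 0) (at 0)" "(L (xhat2 0) has_real_derivative 0) (at 0)"
  by (simp_all add: rhat1_def rhat2_def xhat1_def xhat2_def fl)
end

lemma nec:
  fixes mu lam a :: real and r1 r2 x1 x2 :: vec3
  assumes mu: "mu > 0" and l0: "0 < lam" and l1: "lam < 1"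
    and ce: "circling_equilibrium mu lam a 0 0 (r1,r2,x1,x2)"
  shows "a < 0 \<and> x1 \<bullet> (r1 - r2) = 0 \<and> x2 \<bullet> (r1 - r2) = 0 \<and> x1 \<bullet> r1 = 0 \<and> x2 \<bullet> r2 = 0 \<and>
     x1 \<bullet> x2 = -1 \<and> norm (r1 - r2) = 2 / ((1 - lam) * mu * (- a)) \<and> norm r1 = norm r2"
proof -
  define r where "r = r1 - r2"
  define p where "p = norm r"
  define c where "c = (1 - lam) * mu"
  define xt where "xt = x1 \<bullet> x2"
  have c0: "c > 0" using mu l1 by (simp add: c_def)
  from ce have adm: "norm x1 = 1" "norm x2 = 1" and pp: "norm (r1 - r2) > 0" and p1: "norm r1 > 0" and p2: "norm r2 > 0"
    and D: "\<And>f. f \<in> set (shape_vars 0) \<Longrightarrow> ((\<lambda>t. f (flow_line mu lam a 0 0 (r1,r2,x1,x2) t)) has_real_derivative 0) (at 0)"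
    by (auto simp: circling_equilibrium_def admissible_def rho_def rho1b1_def rho2b2_def)
  have p0: "p > 0" using pp by (simp add: p_def r_def)
  have rne: "r1 - r2 \<noteq> 0" "r1 \<noteq> 0" "r2 \<noteq> 0" using pp p1 p2 by auto
  have x11: "x1 \<bullet> x1 = 1" and x22: "x2 \<bullet> x2 = 1" using adm by (simp_all add: power2_norm_eq_inner[symmetric]) 
  note U = DERIV_unique[OF D]
  have e_rho: "(r1-r2) \<bullet> (x1-x2) / norm (r1-r2) = 0" using U[OF _ dv_rho[OF rne(1)]] by (simp add: shape_vars_def)
  have e_r1: "r1 \<bullet> x1 / norm r1 = 0" using U[OF _ dv_rho1[OF rne(2)]] by (simp add: shape_vars_def)
  have e_r2: "r2 \<bullet> x2 / norm r2 = 0" using U[OF _ dv_rho2[OF rne(3)]] by (simp add: shape_vars_def)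
  have h0: "x1 \<bullet> r = x2 \<bullet> r" using e_rho pp by (simp add: r_def inner_diff_left inner_diff_right inner_commute)
  have h1: "x1 \<bullet> r1 = 0" using e_r1 p1 by (simp add: inner_commute)
  have h2: "x2 \<bullet> r2 = 0" using e_r2 p2 by (simp add: inner_commute)
  define u where "u = x1 \<bullet> r / p"
  have s: "x1 \<bullet> r = u * p" "x2 \<bullet> r = u * p" using p0 h0 by (simp_all add: u_def)
  have rr: "r \<bullet> r = p * p" by (simp add: p_def power2_norm_eq_inner[symmetric] power2_eq_square)
  have W1: "xdot1 mu lam a 0 0 (r1,r2,x1,x2) = - (c * (u - a)) *\<^sub>R ((1 / p) *\<^sub>R r - u *\<^sub>R x1)"
    using h1 by (simp add: xdot1_def Let_def c_def u_def p_def r_def)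
  have W2: "xdot2 mu lam a 0 0 (r1,r2,x1,x2) = - (c * (- u - a)) *\<^sub>R (- ((1 / p) *\<^sub>R r) - (- u) *\<^sub>R x2)"
    using h2 s(2) p0 by (simp add: xdot2_def Let_def c_def p_def r_def)
  define q1 where "q1 = r \<bullet> r1"
  define q2 where "q2 = r \<bullet> r2"
  have q12: "q1 - q2 = p * p" using rr by (simp add: q1_def q2_def r_def inner_diff_right)
  have W1v: "\<And>v. xdot1 mu lam a 0 0 (r1,r2,x1,x2) \<bullet> v = - c * (u - a) * ((r \<bullet> v) / p - u * (x1 \<bullet> v))"
    unfolding W1 by (simp add: inner_diff_left)
  have W2v: "\<And>v. xdot2 mu lam a 0 0 (r1,r2,x1,x2) \<bullet> v = - c * (- u - a) * (- (r \<bullet> v) / p + u * (x2 \<bullet> v))"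
    unfolding W2 by (simp add: inner_diff_left)
  have W1r: "xdot1 mu lam a 0 0 (r1,r2,x1,x2) \<bullet> r = - c * (u - a) * (p - u * u * p)"
    unfolding W1v using p0 rr s by (simp add: inner_commute)
  have W1r1: "xdot1 mu lam a 0 0 (r1,r2,x1,x2) \<bullet> r1 = - c * (u - a) * q1 / p"
    unfolding W1v using p0 h1 by (simp add: q1_def)
  have W1x2: "xdot1 mu lam a 0 0 (r1,r2,x1,x2) \<bullet> x2 = - c * (u - a) * (u - u * xt)"
    unfolding W1v using p0 s by (simp add: inner_commute xt_def)
  have W2r: "xdot2 mu lam a 0 0 (r1,r2,x1,x2) \<bullet> r = c * (u + a) * (- p + u * u * p)"
    unfolding W2v using p0 rr s by (simp add: inner_commute algebra_simps)
  have W2r2: "xdot2 mu lam a 0 0 (r1,r2,x1,x2) \<bullet> r2 = - c * (u + a) * q2 / p"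
    unfolding W2v using p0 h2 by (simp add: q2_def field_simps)
  have W2x1: "x1 \<bullet> xdot2 mu lam a 0 0 (r1,r2,x1,x2) = c * (u + a) * (- u + u * xt)"
    unfolding inner_commute[of x1] W2v using p0 s by (simp add: inner_commute xt_def algebra_simps)
  have e_xb1: "(((xdot1 mu lam a 0 0 (r1,r2,x1,x2) \<bullet> (r1-r2) + x1 \<bullet> (x1-x2)) * norm (r1-r2) - (x1 \<bullet> (r1-r2)) * ((r1-r2) \<bullet> (x1-x2) / norm (r1-r2))) / (norm (r1-r2) * norm (r1-r2))) = 0"
    using U[OF _ dv_xb1[OF rne(1)]] by (simp add: shape_vars_def)
  have e_xb2: "- (((xdot2 mu lam a 0 0 (r1,r2,x1,x2) \<bullet> (r1-r2) + x2 \<bullet> (x1-x2)) * norm (r1-r2) - (x2 \<bullet> (r1-r2)) * ((r1-r2) \<bullet> (x1-x2) / norm (r1-r2))) / (norm (r1-r2) * norm (r1-r2)))  = 0"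
    using U[OF _ dv_xb2[OF rne(1)]] by (simp add: shape_vars_def)
  have e_xb1b1: "(((xdot1 mu lam a 0 0 (r1,r2,x1,x2) \<bullet> r1 + x1 \<bullet> x1) * norm r1 - (x1 \<bullet> r1) * (r1 \<bullet> x1 / norm r1)) / (norm r1 * norm r1)) = 0"
    using U[OF _ dv_xb1b1[OF rne(2)]] by (simp add: shape_vars_def)
  have e_xb2b2: "(((xdot2 mu lam a 0 0 (r1,r2,x1,x2) \<bullet> r2 + x2 \<bullet> x2) * norm r2 - (x2 \<bullet> r2) * (r2 \<bullet> x2 / norm r2)) / (norm r2 * norm r2)) = 0"
    using U[OF _ dv_xb2b2[OF rne(3)]] by (simp add: shape_vars_def)
  have e_xt: "xdot1 mu lam a 0 0 (r1,r2,x1,x2) \<bullet> x2 + x1 \<bullet> xdot2 mu lam a 0 0 (r1,r2,x1,x2) = 0"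
    using U[OF _ dv_xt] by (simp add: shape_vars_def)
  have F1: "- c * (u - a) * (p - u * u * p) + 1 - xt = 0"
    using e_xb1 e_rho pp W1r x11 by (simp add: r_def p_def xt_def inner_diff_right inner_commute)
  have F2: "c * (u + a) * (- p + u * u * p) + xt - 1 = 0"
    using e_xb2 e_rho pp W2r x22 by (simp add: r_def p_def xt_def inner_diff_right inner_commute)
  have F3: "- c * (u - a) * q1 / p + 1 = 0"
  proof -
    have "r1 \<bullet> x1 = 0" using h1 by (simp add: inner_commute)
    hence "xdot1 mu lam a 0 0 (r1,r2,x1,x2) \<bullet> r1 + 1 = 0" using e_xb1b1 p1 x11 by simp
    thus ?thesis using W1r1 by linarith
  qed
  have F4: "- c * (u + a) * q2 / p + 1 = 0"
  proof -
    have "r2 \<bullet> x2 = 0" using h2 by (simp add: inner_commute)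
    hence "xdot2 mu lam a 0 0 (r1,r2,x1,x2) \<bullet> r2 + 1 = 0" using e_xb2b2 p2 x22 by simp
    thus ?thesis using W2r2 by linarith
  qed
  have F5: "- c * (u - a) * (u - u * xt) + c * (u + a) * (- u + u * xt) = 0"
    using e_xt W1x2 W2x1 by simp
  have "- (c * p * 2) * (u * (1 - u * u)) = 0" using F1 F2 by algebra
  hence A1: "u * (1 - u * u) = 0" using c0 p0 by simp
  have "- (c * 2) * (u * u * (1 - xt)) = 0" using F5 by algebra
  hence A2: "u * u * (1 - xt) = 0" using c0 by simp
  have V: "u = 0" if "xt = 1"
  proof -
    have "(x1 - x2) \<bullet> (x1 - x2) = 0" using that x11 x22
      by (simp add: xt_def inner_diff_left inner_diff_right inner_commute)
    hence "x1 = x2" by simp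
    hence "x1 \<bullet> r = 0" using h1 h2 by (simp add: r_def inner_diff_right)
    thus ?thesis using s p0 by simp
  qed
  have u0: "u = 0"
  proof (rule ccontr)
    assume "u \<noteq> 0"
    hence "1 - u * u = 0" using A1 by simp
    hence "1 - xt = 0" using A2 by simp
    thus False using V \<open>u \<noteq> 0\<close> by simp
  qed
  have G1: "c * a * p + 1 - xt = 0" using F1 u0 by (simp add: algebra_simps)
  have G3: "c * a * q1 = - p" using F3 u0 p0 by (simp add: field_simps)
  have G4: "c * a * q2 = p" using F4 u0 p0 by (simp add: field_simps)
  have "c * a * (q1 - q2) = - 2 * p" using G3 G4 by (simp add: algebra_simps)
  hence "c * a * p * p = - 2 * p" using q12 by (simp add: algebra_simps)
  hence "(c * a * p + 2) * p = 0" by (simp add: algebra_simps)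
  hence "c * a * p + 2 = 0" using p0 by simp
  hence cap: "c * a * p = -2" by simp
  have aneg: "a < 0"
  proof (rule ccontr)
    assume "\<not> a < 0"
    hence "c * a * p \<ge> 0" using c0 p0 by simp
    thus False using cap by simp
  qed
  have xtm: "xt = -1" using G1 cap by simp
  have rho: "p = 2 / (c * (- a))" using cap c0 aneg by (simp add: field_simps)
  have "(c * a) * (q1 + q2) = 0" using G3 G4 by (simp add: algebra_simps)
  hence "q1 + q2 = 0" using c0 aneg by simp
  hence "r1 \<bullet> r1 = r2 \<bullet> r2" by (simp add: q1_def q2_def r_def inner_diff_left inner_diff_right inner_commute)
  hence nr: "norm r1 = norm r2" by (simp add: norm_eq_sqrt_inner)
  show ?thesis using aneg s u0 h1 h2 xtm rho nr
    by (simp add: r_def p_def xt_def c_def)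
qed

lemma suff:
  fixes mu lam a R :: real and r1 r2 x1 x2 :: vec3
  assumes x11: "x1 \<bullet> x1 = 1" and x2: "x2 = - x1" and h1: "x1 \<bullet> r1 = 0" and h2: "x1 \<bullet> r2 = 0"
    and nr: "norm (r1 - r2) = R" and nr1: "norm r1 = R/2" and nr2: "norm r2 = R/2"
    and q1: "(r1 - r2) \<bullet> r1 = R*R/2" and q2: "(r1 - r2) \<bullet> r2 = - (R*R/2)"
    and R: "R > 0" and cR: "(1 - lam) * mu * a * R = -2"
  shows "circling_equilibrium mu lam a 0 0 (r1, r2, x1, x2)"
proof -
  define c where "c = (1 - lam) * mu"
  define r where "r = r1 - r2"
  have rr: "r \<bullet> r = R * R" using nr by (simp add: r_def power2_norm_eq_inner[symmetric] power2_eq_square)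
  have xr: "x1 \<bullet> r = 0" using h1 h2 by (simp add: r_def inner_diff_right)
  have ne0: "r1 - r2 \<noteq> 0" "r1 \<noteq> 0" "r2 \<noteq> 0" using R nr nr1 nr2 by auto
  have W1: "xdot1 mu lam a 0 0 (r1, r2, x1, x2) = (c * a) *\<^sub>R ((1/R) *\<^sub>R r)"
    using R h1 xr nr by (simp add: xdot1_def Let_def c_def r_def)
  have W2: "xdot2 mu lam a 0 0 (r1, r2, x1, x2) = - ((c * a) *\<^sub>R ((1/R) *\<^sub>R r))"
    using R h2 xr nr x2 by (simp add: xdot2_def Let_def c_def r_def)
  have W1v: "\<And>v. xdot1 mu lam a 0 0 (r1, r2, x1, x2) \<bullet> v = c * a * (r \<bullet> v) / R" unfolding W1 by simp
  have W2v: "\<And>v. xdot2 mu lam a 0 0 (r1, r2, x1, x2) \<bullet> v = - (c * a * (r \<bullet> v) / R)" unfolding W2 by simp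
  have cR': "c * a * R = -2" using cR by (simp add: c_def)
  have x2r: "x2 \<bullet> r = 0" and x22: "x2 \<bullet> x2 = 1" and x12: "x1 \<bullet> x2 = -1" and x2r2: "x2 \<bullet> r2 = 0"
    using xr x11 h2 by (simp_all add: x2 r_def inner_commute)
  have xd: "x1 - x2 = x1 + (- x2)" by simp
  have rx: "(r1 - r2) \<bullet> (x1 - x2) = 0" and x1d: "x1 \<bullet> (x1 - x2) = 2" and x2d: "x2 \<bullet> (x1 - x2) = -2"
    unfolding xd inner_add_right inner_minus_right using xr x2r x11 x22 x12 by (simp_all add: r_def inner_commute)
  have adm: "norm x1 = 1" "norm x2 = 1" using x11 x2 by (simp_all add: norm_eq_sqrt_inner)
  have D1: "(L mu lam a 0 r1 r2 x1 x2 rho has_real_derivative 0) (at 0)"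
    using dv_rho[OF ne0(1), of mu lam a 0 x1 x2] rx by simp
  have D2: "(L mu lam a 0 r1 r2 x1 x2 (rho1b1 0) has_real_derivative 0) (at 0)"
    using dv_rho1[OF ne0(2), of mu lam a 0 r2 x1 x2] h1 by (simp add: inner_commute)
  have D3: "(L mu lam a 0 r1 r2 x1 x2 (rho2b2 0) has_real_derivative 0) (at 0)"
    using dv_rho2[OF ne0(3), of mu lam a 0 r1 x1 x2] x2r2 by (simp add: inner_commute)
  have "(W1 mu lam a 0 r1 r2 x1 x2 \<bullet> (r1-r2) + x1 \<bullet> (x1-x2)) = 0"
    unfolding W1v using rr R cR' x1d by (simp add: r_def field_simps)
  hence D4: "(L mu lam a 0 r1 r2 x1 x2 xbar1 has_real_derivative 0) (at 0)"
    using dv_xb1[OF ne0(1), of mu lam a 0 x1 x2] rx by simp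
  have "(W2 mu lam a 0 r1 r2 x1 x2 \<bullet> (r1-r2) + x2 \<bullet> (x1-x2)) = 0"
    unfolding W2v using rr R cR' x2d by (simp add: r_def field_simps)
  hence D5: "(L mu lam a 0 r1 r2 x1 x2 xbar2 has_real_derivative 0) (at 0)"
    using dv_xb2[OF ne0(1), of mu lam a 0 x1 x2] rx by simp
  have "(W1 mu lam a 0 r1 r2 x1 x2 \<bullet> r1 + x1 \<bullet> x1) = 0"
    proof -
    have "c * a * (R*R/2) / R = c * a * R / 2" using R by simp
    thus ?thesis unfolding W1v using cR' x11 by (simp add: r_def q1)
  qed
  hence D6: "(L mu lam a 0 r1 r2 x1 x2 (xbar1b1 0) has_real_derivative 0) (at 0)"
    using dv_xb1b1[OF ne0(2), of mu lam a 0 r2 x1 x2] h1 by simp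
  have "(W2 mu lam a 0 r1 r2 x1 x2 \<bullet> r2 + x2 \<bullet> x2) = 0"
    proof -
    have "c * a * (R*R/2) / R = c * a * R / 2" using R by simp
    thus ?thesis unfolding W2v using cR' x22 by (simp add: r_def q2)
  qed
  hence D7: "(L mu lam a 0 r1 r2 x1 x2 (xbar2b2 0) has_real_derivative 0) (at 0)"
    using dv_xb2b2[OF ne0(3), of mu lam a 0 r1 x1 x2] x2r2 by (simp add: inner_commute)
  have "W1 mu lam a 0 r1 r2 x1 x2 \<bullet> x2 + x1 \<bullet> W2 mu lam a 0 r1 r2 x1 x2 = 0"
    unfolding W1v inner_commute[of x1] W2v using xr x2r by (simp add: inner_commute)
  hence D8: "(L mu lam a 0 r1 r2 x1 x2 xtilde has_real_derivative 0) (at 0)"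
    using dv_xt[of mu lam a 0 r1 r2 x1 x2] by simp
  show ?thesis
    unfolding circling_equilibrium_def
    using adm ne0 D1 D2 D3 D4 D5 D6 D7 D8 dv_hats[of mu lam a 0 r1 r2 x1 x2]
    by (simp add: admissible_def rho_def rho1b1_def rho2b2_def shape_vars_def)
qed

theorem proposition4p1:
  fixes mu lam a :: real
  assumes "mu > 0" and "0 < lam" and "lam < 1" and "-1 \<le> a" and "a \<le> 1"
  shows "((\<exists>S. circling_equilibrium mu lam a 0 0 S) \<longleftrightarrow> a < 0) \<and>
         (\<forall>S. circling_equilibrium mu lam a 0 0 S \<longrightarrow>
            xbar1 S = 0 \<and> xbar2 S = 0 \<and> xbar1b1 0 S = 0 \<and> xbar2b2 0 S = 0 \<and>
            xtilde S = -1 \<and> rho S = 2 / ((1 - lam) * mu * (- a)) \<and>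
            rho1b1 0 S = rho2b2 0 S)"
proof (intro conjI iffI allI impI)
  show "a < 0" if ex: "\<exists>S. circling_equilibrium mu lam a 0 0 S"
  proof -
    obtain r1 r2 x1 x2 where "circling_equilibrium mu lam a 0 0 (r1,r2,x1,x2)" using ex by auto
    from nec[OF assms(1-3) this] show ?thesis by simp
  qed
next
  fix S assume ce: "circling_equilibrium mu lam a 0 0 S"
  obtain r1 r2 x1 x2 where S: "S = (r1,r2,x1,x2)" by (cases S) auto
  note N = nec[OF assms(1-3) ce[unfolded S]]
  show "xbar1 S = 0" "xbar2 S = 0" "xbar1b1 0 S = 0" "xbar2b2 0 S = 0" "xtilde S = -1"
     "rho S = 2 / ((1 - lam) * mu * (- a))" "rho1b1 0 S = rho2b2 0 S"
    using N by (simp_all add: S xbar1_def xbar2_def xbar1b1_def xbar2b2_def xtilde_def rho_def rho1b1_def rho2b2_def)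
next
  assume an: "a < 0"
  define c where "c = (1 - lam) * mu"
  have c0: "c > 0" using assms by (simp add: c_def)
  define R where "R = 2 / (c * (- a))"
  have R: "R > 0" using c0 an by (simp add: R_def mult_pos_neg)
  have cR: "(1 - lam) * mu * a * R = -2" unfolding c_def[symmetric] using c0 an by (simp add: R_def field_simps)
  define e :: vec3 where "e = axis 1 1"
  define f :: vec3 where "f = axis 2 1"
  have ee: "e \<bullet> e = 1" and ff: "f \<bullet> f = 1" and ef: "f \<bullet> e = 0" by (simp_all add: e_def f_def inner_axis_axis)
  have ne: "norm e = 1" using ee by (simp add: norm_eq_sqrt_inner)
  define r1 where "r1 = (R/2) *\<^sub>R e"
  define r2 where "r2 = (- (R/2)) *\<^sub>R e"
  have rd: "r1 - r2 = R *\<^sub>R e" unfolding r1_def r2_def by (subst scaleR_diff_left[symmetric]) simp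
  have "circling_equilibrium mu lam a 0 0 (r1, r2, f, - f)"
  proof (rule suff)
    show "f \<bullet> f = 1" by fact
    show "f \<bullet> r1 = 0" "f \<bullet> r2 = 0" using ef by (simp_all add: r1_def r2_def)
    show "norm (r1 - r2) = R" using R ne by (simp add: rd)
    show "norm r1 = R/2" "norm r2 = R/2" using R ne by (simp_all add: r1_def r2_def)
    show "(r1 - r2) \<bullet> r1 = R * R / 2" "(r1 - r2) \<bullet> r2 = - (R * R / 2)" proof -
      have "(r1 - r2) \<bullet> r1 = R * (R/2)" unfolding rd by (simp only: r1_def inner_scaleR_left inner_scaleR_right ee mult_1_right)
      thus "(r1 - r2) \<bullet> r1 = R * R / 2" by simp
      have "(r1 - r2) \<bullet> r2 = R * (- (R/2))" unfolding rd by (simp only: r2_def inner_scaleR_left inner_scaleR_right ee mult_1_right)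
      thus "(r1 - r2) \<bullet> r2 = - (R * R / 2)" by simp
    qed
  qed (use R cR in auto)
  thus "\<exists>S. circling_equilibrium mu lam a 0 0 S" by blast
qed
end
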